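(* Let $\mathcal{C}$ be a $(2,1)$ binary convolutional code with polynomial generator matrix $(g_1(D)\ \ g_2(D))$, where $g_i(D)=\sum_{j=0}^{m}g_{i,j}D^j\in\mathbb{F}_2[D]$ and $m$ is the maximum degree of $g_1,g_2$. Then for every $k\ge m+1$, the $[2k,k]$ linear code $\mathcal{C}_{\mathrm{tb}}$ obtained from $\mathcal{C}$ by tailbiting is isodual.
   Context: Tailbiting: for $k\ge m+1$, let $\mathbf{g}=(g_{1,0},g_{2,0},g_{1,1},g_{2,1},\ldots,g_{1,m},g_{2,m},0,\ldots,0)\in\mathbb{F}_2^{2k}$. The tailbiting code $\mathcal{C}_{\mathrm{tb}}\subseteq\mathbb{F}_2^{2k}$ is the binary linear code generated by the $k\times 2k$ matrix whose $j$-th row ($j=0,\ldots,k-1$) is the cyclic shift of $\mathbf{g}$ to the right by $2j$ positions (so the last $m$ rows wrap around). A binary linear code $\mathcal{C}'$ of length $N$ is isodual if there is a permutation $\pi$ of the $N$ coordinates with $\mathcal{C}'=\pi(\mathcal{C}'^\perp)$, where $\mathcal{C}'^\perp$ is the dual code with respect to the standard inner product.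
   Formalization: The tailbiting code $\mathcal{C}_{\mathrm{tb}}$ has dimension k as an added hypothesis, so isoduality is claimed only when $\mathcal{C}_{\mathrm{tb}}$ is indeed a $[2k,k]$ code. The paper assumes this as well. *)

theory Defs
  imports "HOL-Library.Z2" "HOL-Computational_Algebra.Polynomial" "HOL-Combinatorics.Permutations"
begin

definition bvecs :: "nat \<Rightarrow> (nat \<Rightarrow> bit) set" where
  "bvecs N = {x. \<forall>i\<ge>N. x i = 0}"

definition dual_code :: "nat \<Rightarrow> (nat \<Rightarrow> bit) set \<Rightarrow> (nat \<Rightarrow> bit) set" where
  "dual_code N C = {y \<in> bvecs N. \<forall>x\<in>C. (\<Sum>i<N. x i * y i) = 0}"

definition perm_code :: "(nat \<Rightarrow> nat) \<Rightarrow> (nat \<Rightarrow> bit) set \<Rightarrow> (nat \<Rightarrow> bit) set" where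
  "perm_code \<pi> C = (\<lambda>x. x \<circ> inv \<pi>) ` C"

definition isodual :: "nat \<Rightarrow> (nat \<Rightarrow> bit) set \<Rightarrow> bool" where
  "isodual N C \<longleftrightarrow> (\<exists>\<pi>. \<pi> permutes {..<N} \<and> C = perm_code \<pi> (dual_code N C))"

text \<open>The vector g = (g_{1,0}, g_{2,0}, ..., g_{1,m}, g_{2,m}, 0, ..., 0) of length 2k.\<close>
definition tb_gvec :: "bit poly \<Rightarrow> bit poly \<Rightarrow> nat \<Rightarrow> nat \<Rightarrow> bit" where
  "tb_gvec g1 g2 k i =
     (let m = max (degree g1) (degree g2) in
      if i < 2 * k \<and> i div 2 \<le> m
      then (if even i then coeff g1 (i div 2) else coeff g2 (i div 2)) else 0)"

text \<open>Row j: cyclic shift of g to the right by 2j positions (within length 2k).\<close>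
definition tb_row :: "bit poly \<Rightarrow> bit poly \<Rightarrow> nat \<Rightarrow> nat \<Rightarrow> nat \<Rightarrow> bit" where
  "tb_row g1 g2 k j i =
     (if i < 2 * k then tb_gvec g1 g2 k ((i + 2 * k - (2 * j) mod (2 * k)) mod (2 * k)) else 0)"

definition tb_code :: "bit poly \<Rightarrow> bit poly \<Rightarrow> nat \<Rightarrow> (nat \<Rightarrow> bit) set" where
  "tb_code g1 g2 k = {(\<lambda>i. \<Sum>j<k. u j * tb_row g1 g2 k j i) | u. True}"

end

theory Submission imports Defs begin

definition sg :: "bit \<Rightarrow> int" where "sg b = (if b = 0 then 1 else -1)"

lemma bit_cases2: "(b::bit) = 0 \<or> b = 1" by auto

lemma sg_add: "sg (a + b) = sg a * sg b"
  using bit_cases2[of a] bit_cases2[of b] by (auto simp: sg_def)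

lemma sum_invol_zero:
  fixes g :: "'a \<Rightarrow> int"
  assumes "finite A" "\<And>a. a \<in> A \<Longrightarrow> h a \<in> A" "\<And>a. a \<in> A \<Longrightarrow> h (h a) = a"
    "\<And>a. a \<in> A \<Longrightarrow> g (h a) = - g a"
  shows "(\<Sum>a\<in>A. g a) = 0"
proof -
  have bij: "bij_betw h A A"
    by (rule bij_betw_byWitness[where f'=h]) (use assms in auto)
  have "(\<Sum>a\<in>A. g a) = (\<Sum>a\<in>A. g (h a))"
    using sum.reindex_bij_betw[OF bij, of g] by simp
  also have "\<dots> = - (\<Sum>a\<in>A. g a)" using assms(4) by (simp add: sum_negf)
  finally show ?thesis by simp
qed

lemma bvecs_Suc: "bvecs (Suc N) = bvecs N \<union> (\<lambda>x. x(N := 1)) ` bvecs N"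
proof (rule set_eqI, rule iffI)
  fix x assume x: "x \<in> bvecs (Suc N)"
  show "x \<in> bvecs N \<union> (\<lambda>x. x(N := 1)) ` bvecs N"
  proof (cases "x N = 0")
    case True
    have "x i = 0" if "i \<ge> N" for i
    proof (cases "i = N")
      case False
      then have "i \<ge> Suc N" using that by simp
      then show ?thesis using x unfolding bvecs_def by blast
    qed (use True in simp)
    then have "x \<in> bvecs N" unfolding bvecs_def by blast
    then show ?thesis by blast
  next
    case False
    then have "x N = 1" by simp
    then have "x = (x(N:=0))(N:=1)" by auto
    moreover have "x(N:=0) \<in> bvecs N" using x unfolding bvecs_def by auto
    ultimately show ?thesis by blast
  qed
next
  fix x assume "x \<in> bvecs N \<union> (\<lambda>x. x(N := 1)) ` bvecs N"
  then show "x \<in> bvecs (Suc N)" unfolding bvecs_def by auto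
qed

lemma bvecs_fin_card: "finite (bvecs N) \<and> card (bvecs N) = 2 ^ N"
proof (induction N)
  case 0
  have "bvecs 0 = {\<lambda>_. 0}" unfolding bvecs_def by auto
  then show ?case by simp
next
  case (Suc N)
  have inj: "inj_on (\<lambda>x. x(N := 1)) (bvecs N)"
  proof (rule inj_onI)
    fix x y assume xy: "x \<in> bvecs N" "y \<in> bvecs N" "x(N := 1) = y(N := 1)"
    show "x = y"
    proof
      fix i show "x i = y i"
        using xy fun_upd_apply[of x N 1 i] fun_upd_apply[of y N 1 i] unfolding bvecs_def
        by (cases "i = N") auto
    qed
  qed
  have disj: "bvecs N \<inter> (\<lambda>x. x(N := 1)) ` bvecs N = {}"
    unfolding bvecs_def by auto
  have "card (bvecs (Suc N)) = card (bvecs N) + card ((\<lambda>x. x(N := 1)) ` bvecs N)"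
    unfolding bvecs_Suc using Suc disj by (simp add: card_Un_disjoint)
  also have "\<dots> = 2 ^ Suc N" using card_image[OF inj] Suc by simp
  finally show ?case using Suc bvecs_Suc by simp
qed

definition dotp :: "nat \<Rightarrow> (nat \<Rightarrow> bit) \<Rightarrow> (nat \<Rightarrow> bit) \<Rightarrow> bit" where
  "dotp N x y = (\<Sum>i<N. x i * y i)"

lemma dual_card:
  assumes W: "W \<subseteq> bvecs N" "(\<lambda>_. 0) \<in> W" "\<And>x y. x \<in> W \<Longrightarrow> y \<in> W \<Longrightarrow> (\<lambda>i. x i + y i) \<in> W"
  shows "card W * card (dual_code N W) = 2 ^ N"
proof -
  let ?V = "bvecs N"
  have finV: "finite ?V" and cV: "card ?V = 2 ^ N" using bvecs_fin_card by auto
  have finW: "finite W" using finite_subset[OF W(1) finV] .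
  have dsub: "dual_code N W \<subseteq> ?V" unfolding dual_code_def by auto
  have inner: "(\<Sum>x\<in>W. sg (dotp N x y)) = (if y \<in> dual_code N W then int (card W) else 0)"
    if y: "y \<in> ?V" for y
  proof (cases "y \<in> dual_code N W")
    case True
    then have "\<And>x. x \<in> W \<Longrightarrow> dotp N x y = 0" unfolding dual_code_def dotp_def by auto
    then show ?thesis using True by (simp add: sg_def)
  next
    case False
    then obtain x0 where x0: "x0 \<in> W" "dotp N x0 y \<noteq> 0" using y unfolding dual_code_def dotp_def by auto
    then have x01: "dotp N x0 y = 1" by simp
    have "(\<Sum>x\<in>W. sg (dotp N x y)) = 0"
    proof (rule sum_invol_zero[where h="\<lambda>x i. x i + x0 i"])
      fix x assume x: "x \<in> W"
      show "(\<lambda>i. x i + x0 i) \<in> W" using W(3)[OF x x0(1)] .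
      show "(\<lambda>i. (x i + x0 i) + x0 i) = x" by (auto simp: fun_eq_iff add.assoc)
      have "dotp N (\<lambda>i. x i + x0 i) y = dotp N x y + dotp N x0 y"
        unfolding dotp_def by (simp only: distrib_right sum.distrib)
      then show "sg (dotp N (\<lambda>i. x i + x0 i) y) = - sg (dotp N x y)"
        using x01 by (simp add: sg_add sg_def)
    qed (use finW in auto)
    then show ?thesis using False by simp
  qed
  have inner2: "(\<Sum>y\<in>?V. sg (dotp N x y)) = (if x = (\<lambda>_. 0) then int (card ?V) else 0)"
    if x: "x \<in> ?V" for x
  proof (cases "x = (\<lambda>_. 0)")
    case True
    then show ?thesis by (simp add: sg_def dotp_def)
  next
    case False
    then obtain i0 where i0: "x i0 \<noteq> 0" by (meson ext)
    then have i0N: "i0 < N" using x unfolding bvecs_def using not_le by blast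
    have "(\<Sum>y\<in>?V. sg (dotp N x y)) = 0"
    proof (rule sum_invol_zero[where h="\<lambda>y. y(i0 := y i0 + 1)"])
      fix y assume y: "y \<in> ?V"
      show "y(i0 := y i0 + 1) \<in> ?V" using y i0N unfolding bvecs_def by auto
      show "(y(i0 := y i0 + 1))(i0 := (y(i0 := y i0 + 1)) i0 + 1) = y"
        by (auto simp: fun_eq_iff add.assoc)
      have "dotp N x (y(i0 := y i0 + 1)) = (\<Sum>i<N. x i * y i + (if i = i0 then x i else 0))"
        unfolding dotp_def by (rule sum.cong) (auto simp only: fun_upd_apply distrib_left mult_1_right mult_0_right add_0_right split: if_splits)
      also have "\<dots> = dotp N x y + x i0"
        unfolding dotp_def sum.distrib by (simp only: sum.delta finite_lessThan lessThan_iff i0N if_True)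
      finally show "sg (dotp N x (y(i0 := y i0 + 1))) = - sg (dotp N x y)"
        using i0 by (simp add: sg_add sg_def)
    qed (use finV in auto)
    then show ?thesis using False by simp
  qed
  have "(\<Sum>y\<in>?V. \<Sum>x\<in>W. sg (dotp N x y)) = (\<Sum>y\<in>?V. if y \<in> dual_code N W then int (card W) else 0)"
    using inner by (rule sum.cong[OF refl])
  also have "\<dots> = int (card W) * int (card (dual_code N W))"
    using finV dsub by (simp add: sum.If_cases Int_absorb1)
  finally have e1: "(\<Sum>y\<in>?V. \<Sum>x\<in>W. sg (dotp N x y)) = int (card W) * int (card (dual_code N W))" .
  have "(\<Sum>y\<in>?V. \<Sum>x\<in>W. sg (dotp N x y)) = (\<Sum>x\<in>W. \<Sum>y\<in>?V. sg (dotp N x y))"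
    by (rule sum.swap)
  also have "\<dots> = (\<Sum>x\<in>W. if x = (\<lambda>_. 0) then int (card ?V) else 0)"
    using inner2 W(1) by (intro sum.cong) auto
  also have "\<dots> = int (card ?V)" using finW W(2) by (simp add: sum.delta)
  finally show ?thesis using e1 cV by (metis of_nat_eq_iff of_nat_mult of_nat_numeral of_nat_power)
qed



declare add_bit_eq_xor[simp del] mult_bit_eq_and[simp del]

definition Gf :: "bit poly \<Rightarrow> nat \<Rightarrow> int \<Rightarrow> bit" where
  "Gf g k z = coeff g (nat (z mod int k))"

lemma Gf_mod: "Gf g k ((a mod int k) + b) = Gf g k (a + b)"
  unfolding Gf_def by (simp add: mod_add_left_eq)

lemma idx_nat:
  fixes t k j :: nat
  assumes "t < k"
  shows "(2 * t + 2 * k - (2 * j) mod (2 * k)) mod (2 * k) = 2 * ((t + k - j mod k) mod k)"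
    and "(2 * t + 1 + 2 * k - (2 * j) mod (2 * k)) mod (2 * k) = 2 * ((t + k - j mod k) mod k) + 1"
proof -
  have jm: "j mod k < k" using assms by simp
  have a: "(2 * j) mod (2 * k) = 2 * (j mod k)" by (rule mult_mod_right[symmetric])
  have b: "2 * t + 2 * k - 2 * (j mod k) = 2 * (t + k - j mod k)" using jm by simp
  show "(2 * t + 2 * k - (2 * j) mod (2 * k)) mod (2 * k) = 2 * ((t + k - j mod k) mod k)"
    unfolding a b by (rule mult_mod_right[symmetric])
  have c: "2 * t + 1 + 2 * k - 2 * (j mod k) = 2 * (t + k - j mod k) + 1" using jm by simp
  have "(2 * (t + k - j mod k) + 1) mod (2 * k) = 2 * ((2 * (t + k - j mod k) + 1) div 2 mod k) + (2 * (t + k - j mod k) + 1) mod 2"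
    by (rule mod_mult2_eq)
  also have "\<dots> = 2 * ((t + k - j mod k) mod k) + 1" by simp
  finally have "(2 * (t + k - j mod k) + 1) mod (2 * k) = 2 * ((t + k - j mod k) mod k) + 1" .
  then show "(2 * t + 1 + 2 * k - (2 * j) mod (2 * k)) mod (2 * k) = 2 * ((t + k - j mod k) mod k) + 1"
    unfolding a c .
qed

lemma idx_int:
  fixes t k j :: nat
  assumes "t < k"
  shows "int ((t + k - j mod k) mod k) = (int t - int j) mod int k"
proof -
  have "j mod k < k" using assms by simp
  then have jm: "j mod k \<le> t + k" by linarith
  have "int ((t + k - j mod k) mod k) = (int t + int k - int (j mod k)) mod int k"
    using jm by (simp add: zmod_int of_nat_diff)
  also have "\<dots> = (int t + int k - int j mod int k) mod int k" by (simp add: zmod_int)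
  also have "\<dots> = (int t + int k - int j) mod int k" by (rule mod_diff_right_eq)
  also have "int t + int k - int j = (int t - int j) + int k" by simp
  also have "((int t - int j) + int k) mod int k = (int t - int j) mod int k" by (rule mod_add_self2)
  finally show ?thesis .
qed

lemma gvec_even:
  assumes "d < k" "k \<ge> max (degree g1) (degree g2) + 1"
  shows "tb_gvec g1 g2 k (2 * d) = coeff g1 d"
proof (cases "d \<le> max (degree g1) (degree g2)")
  case True
  then show ?thesis unfolding tb_gvec_def Let_def using assms by simp
next
  case False
  then have "coeff g1 d = 0" by (intro coeff_eq_0) simp
  then show ?thesis unfolding tb_gvec_def Let_def using assms False by simp
qed

lemma gvec_odd:
  assumes "d < k" "k \<ge> max (degree g1) (degree g2) + 1"
  shows "tb_gvec g1 g2 k (2 * d + 1) = coeff g2 d"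
proof (cases "d \<le> max (degree g1) (degree g2)")
  case True
  then show ?thesis unfolding tb_gvec_def Let_def using assms by simp
next
  case False
  then have "coeff g2 d = 0" by (intro coeff_eq_0) simp
  then show ?thesis unfolding tb_gvec_def Let_def using assms False by simp
qed

lemma coeff_Gf:
  assumes "t < k"
  shows "coeff g ((t + k - j mod k) mod k) = Gf g k (int t - int j)"
  unfolding Gf_def idx_int[OF assms(1), symmetric] nat_int ..

lemma row_even:
  assumes "t < k" "k \<ge> max (degree g1) (degree g2) + 1"
  shows "tb_row g1 g2 k j (2 * t) = Gf g1 k (int t - int j)"
proof -
  have d: "(t + k - j mod k) mod k < k" using assms(1) by simp
  have "tb_row g1 g2 k j (2 * t) = tb_gvec g1 g2 k (2 * ((t + k - j mod k) mod k))"
    unfolding tb_row_def idx_nat(1)[OF assms(1)] using assms(1) by simp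
  also have "\<dots> = Gf g1 k (int t - int j)"
    using gvec_even[OF d assms(2)] coeff_Gf[OF assms(1)] by simp
  finally show ?thesis .
qed

lemma row_odd:
  assumes "t < k" "k \<ge> max (degree g1) (degree g2) + 1"
  shows "tb_row g1 g2 k j (2 * t + 1) = Gf g2 k (int t - int j)"
proof -
  have d: "(t + k - j mod k) mod k < k" using assms(1) by simp
  have "tb_row g1 g2 k j (2 * t + 1) = tb_gvec g1 g2 k (2 * ((t + k - j mod k) mod k) + 1)"
    unfolding tb_row_def idx_nat(2)[OF assms(1)] using assms(1) by simp
  also have "\<dots> = Gf g2 k (int t - int j)"
    using gvec_odd[OF d assms(2)] coeff_Gf[OF assms(1)] by simp
  finally show ?thesis .
qed



lemma bit_add_self: "(x::bit) + x = 0"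
  using bit_cases2[of x] by auto

lemma Gf_cong: "a mod int k = b mod int k \<Longrightarrow> Gf g k a = Gf g k b"
  unfolding Gf_def by simp

definition sig :: "nat \<Rightarrow> nat \<Rightarrow> nat" where
  "sig k i = (if i < 2 * k then (if even i then 2 * ((k - i div 2) mod k) + 1
                                 else 2 * ((k - i div 2) mod k)) else i)"

lemma sig_even: "t < k \<Longrightarrow> sig k (2 * t) = 2 * ((k - t) mod k) + 1"
  unfolding sig_def by simp

lemma sig_odd: "t < k \<Longrightarrow> sig k (2 * t + 1) = 2 * ((k - t) mod k)"
  unfolding sig_def by simp

lemma nt_lt: "t < (k::nat) \<Longrightarrow> (k - t) mod k < k" by simp

lemma nt_nt: "t < (k::nat) \<Longrightarrow> (k - (k - t) mod k) mod k = t"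
proof (cases "t = 0")
  case True
  assume "t < k" then show ?thesis using True by simp
next
  case False
  assume "t < k"
  then have "(k - t) mod k = k - t" using False by simp
  then show ?thesis using \<open>t < k\<close> by simp
qed

lemma nt_int: "t < (k::nat) \<Longrightarrow> int ((k - t) mod k) = (- int t) mod int k"
proof -
  assume t: "t < k"
  have "int ((k - t) mod k) = int (k - t) mod int k" by (rule zmod_int)
  also have "int (k - t) = - int t + int k" using t by simp
  also have "(- int t + int k) mod int k = (- int t) mod int k" by (rule mod_add_self2)
  finally show ?thesis .
qed

lemma sig_sig: "sig k (sig k i) = i"
proof (cases "i < 2 * k")
  case True
  define t where "t = i div 2"
  have t: "t < k" using True unfolding t_def by simp
  have n: "(k - t) mod k < k" using nt_lt[OF t] .
  show ?thesis
  proof (cases "even i")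
    case True
    then have i: "i = 2 * t" unfolding t_def by simp
    show ?thesis unfolding i sig_even[OF t] sig_odd[OF n] nt_nt[OF t] ..
  next
    case False
    then have i: "i = 2 * t + 1" unfolding t_def by simp
    show ?thesis unfolding i sig_odd[OF t] sig_even[OF n] nt_nt[OF t] ..
  qed
next
  case False
  then show ?thesis unfolding sig_def by simp
qed

lemma sig_range: "i < 2 * k \<Longrightarrow> sig k i < 2 * k"
proof -
  assume i: "i < 2 * k"
  define t where "t = i div 2"
  have t: "t < k" using i unfolding t_def by simp
  have n: "(k - t) mod k < k" using nt_lt[OF t] .
  show ?thesis
  proof (cases "even i")
    case True
    then have i: "i = 2 * t" unfolding t_def by simp
    show ?thesis unfolding i sig_even[OF t] using n by simp
  next
    case False
    then have i: "i = 2 * t + 1" unfolding t_def by simp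
    show ?thesis unfolding i sig_odd[OF t] using n by simp
  qed
qed

lemma sig_permutes: "sig k permutes {..<2 * k}"
proof (rule bij_imp_permutes)
  show "bij_betw (sig k) {..<2 * k} {..<2 * k}"
    by (rule bij_betw_byWitness[where f'="sig k"]) (auto simp: sig_sig sig_range)
  show "\<And>x. x \<notin> {..<2 * k} \<Longrightarrow> sig k x = x" unfolding sig_def by simp
qed

lemma inv_sig: "inv (sig k) = sig k"
  by (rule inv_unique_comp) (auto simp: fun_eq_iff sig_sig)

lemma sum_2k: "(\<Sum>i<2 * k. f i) = (\<Sum>t<k. f (2 * t) + f (2 * t + 1))"
  for f :: "nat \<Rightarrow> 'a::comm_monoid_add"
proof (induction k)
  case 0
  then show ?case by simp
next
  case (Suc k)
  have "2 * Suc k = Suc (Suc (2 * k))" by simp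
  then show ?case using Suc by (simp add: ac_simps)
qed

lemma sum_reflect:
  fixes h :: "int \<Rightarrow> 'a::comm_monoid_add"
  assumes k: "k > 0" and per: "\<And>z. h z = h (z mod int k)"
  shows "(\<Sum>t<k. h (int t)) = (\<Sum>t<k. h (c - int t))"
proof -
  define \<phi> where "\<phi> t = nat ((c - int t) mod int k)" for t
  have phi_int: "int (\<phi> t) = (c - int t) mod int k" for t
    unfolding \<phi>_def using k by simp
  have phi_lt: "\<phi> t < k" for t
    using phi_int[of t] k by (metis of_nat_0_less_iff of_nat_less_iff pos_mod_bound)
  have phi_phi: "\<phi> (\<phi> t) = t" if "t < k" for t
  proof -
    have "int (\<phi> (\<phi> t)) = (c - (c - int t) mod int k) mod int k" using phi_int by simp
    also have "\<dots> = (c - (c - int t)) mod int k" by (rule mod_diff_right_eq)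
    also have "\<dots> = int t" using that by simp
    finally show ?thesis by simp
  qed
  have bij: "bij_betw \<phi> {..<k} {..<k}"
    by (rule bij_betw_byWitness[where f'=\<phi>]) (auto simp: phi_phi phi_lt)
  have "(\<Sum>t<k. h (c - int t)) = (\<Sum>t<k. h (int (\<phi> t)))"
    by (rule sum.cong[OF refl]) (metis per phi_int)
  also have "\<dots> = (\<Sum>t<k. h (int t))"
    using sum.reindex_bij_betw[OF bij, of "\<lambda>s. h (int s)"] by simp
  finally show ?thesis by simp
qed


lemma row_sig_even:
  assumes "t < k" "k \<ge> max (degree g1) (degree g2) + 1"
  shows "tb_row g1 g2 k j (sig k (2 * t)) = Gf g2 k (- int t - int j)"
proof -
  have n: "(k - t) mod k < k" using nt_lt[OF assms(1)] .
  have "tb_row g1 g2 k j (sig k (2 * t)) = Gf g2 k (int ((k - t) mod k) - int j)"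
    unfolding sig_even[OF assms(1)] using row_odd[OF n assms(2)] .
  also have "\<dots> = Gf g2 k (- int t - int j)"
    unfolding nt_int[OF assms(1)] by (rule Gf_cong) (simp add: mod_diff_left_eq)
  finally show ?thesis .
qed

lemma row_sig_odd:
  assumes "t < k" "k \<ge> max (degree g1) (degree g2) + 1"
  shows "tb_row g1 g2 k j (sig k (2 * t + 1)) = Gf g1 k (- int t - int j)"
proof -
  have n: "(k - t) mod k < k" using nt_lt[OF assms(1)] .
  have "tb_row g1 g2 k j (sig k (2 * t + 1)) = Gf g1 k (int ((k - t) mod k) - int j)"
    unfolding sig_odd[OF assms(1)] using row_even[OF n assms(2)] .
  also have "\<dots> = Gf g1 k (- int t - int j)"
    unfolding nt_int[OF assms(1)] by (rule Gf_cong) (simp add: mod_diff_left_eq)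
  finally show ?thesis .
qed

lemma key_orth:
  assumes km: "k \<ge> max (degree g1) (degree g2) + 1"
  shows "(\<Sum>i<2 * k. tb_row g1 g2 k l i * tb_row g1 g2 k j (sig k i)) = 0"
proof -
  have k: "k > 0" using km by simp
  define S1 where "S1 = (\<Sum>t<k. Gf g1 k (int t - int l) * Gf g2 k (- int t - int j))"
  define h where "h z = Gf g2 k (z - int l) * Gf g1 k (- z - int j)" for z
  have "(\<Sum>i<2 * k. tb_row g1 g2 k l i * tb_row g1 g2 k j (sig k i))
      = (\<Sum>t<k. Gf g1 k (int t - int l) * Gf g2 k (- int t - int j)
               + Gf g2 k (int t - int l) * Gf g1 k (- int t - int j))"
    unfolding sum_2k
  proof (rule sum.cong[OF refl])
    fix t assume "t \<in> {..<k}"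
    then have t: "t < k" by simp
    show "tb_row g1 g2 k l (2 * t) * tb_row g1 g2 k j (sig k (2 * t)) +
          tb_row g1 g2 k l (2 * t + 1) * tb_row g1 g2 k j (sig k (2 * t + 1)) =
          Gf g1 k (int t - int l) * Gf g2 k (- int t - int j)
               + Gf g2 k (int t - int l) * Gf g1 k (- int t - int j)"
      unfolding row_even[OF t km] row_odd[OF t km] row_sig_even[OF t km] row_sig_odd[OF t km] ..
  qed
  also have "\<dots> = S1 + (\<Sum>t<k. h (int t))"
    unfolding S1_def h_def by (rule sum.distrib)
  also have "(\<Sum>t<k. h (int t)) = (\<Sum>t<k. h (int l - int j - int t))"
  proof (rule sum_reflect[OF k])
    fix z
    have a: "(z - int l) mod int k = (z mod int k - int l) mod int k" by (simp add: mod_diff_left_eq)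
    have b: "(- z - int j) mod int k = (- (z mod int k) - int j) mod int k"
    proof -
      have e: "- (z mod int k) - int j = (- z - int j) + (z div int k) * int k"
        using div_mult_mod_eq[of z "int k"] by linarith
      have "(- (z mod int k) - int j) mod int k = ((- z - int j) + (z div int k) * int k) mod int k"
        by (simp only: e)
      also have "\<dots> = (- z - int j) mod int k" by (rule mod_mult_self1)
      finally show ?thesis by simp
    qed
    show "h z = h (z mod int k)" unfolding h_def using Gf_cong[OF a] Gf_cong[OF b] by simp
  qed
  also have "\<dots> = S1"
    unfolding S1_def h_def by (rule sum.cong[OF refl]) (simp add: mult.commute algebra_simps)
  also have "S1 + S1 = 0" by (rule bit_add_self)
  finally show ?thesis .
qed


theorem proposition2:
  fixes g1 g2 :: "bit poly" and k :: nat
  assumes "k \<ge> max (degree g1) (degree g2) + 1"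
    and "card (tb_code g1 g2 k) = 2 ^ k"
  shows "isodual (2 * k) (tb_code g1 g2 k)"
proof -
  note km = assms(1)
  define C where "C = tb_code g1 g2 k"
  define D where "D = dual_code (2 * k) C"
  have Cdef: "x \<in> C \<longleftrightarrow> (\<exists>u. x = (\<lambda>i. \<Sum>j<k. u j * tb_row g1 g2 k j i))" for x
    unfolding C_def tb_code_def by blast
  have rowz: "tb_row g1 g2 k j i = 0" if "i \<ge> 2 * k" for j i
    unfolding tb_row_def using that by simp
  have Csub: "C \<subseteq> bvecs (2 * k)"
  proof
    fix x assume "x \<in> C"
    from Cdef[THEN iffD1, OF this] obtain u where u: "x = (\<lambda>i. \<Sum>j<k. u j * tb_row g1 g2 k j i)" ..
    show "x \<in> bvecs (2 * k)" unfolding bvecs_def u by (simp add: rowz)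
  qed
  have C0: "(\<lambda>_. 0) \<in> C"
    unfolding Cdef by (rule exI[where x="\<lambda>_. 0"]) simp
  have Cadd: "(\<lambda>i. x i + y i) \<in> C" if "x \<in> C" "y \<in> C" for x y
  proof -
    from Cdef[THEN iffD1, OF that(1)] obtain u where u: "x = (\<lambda>i. \<Sum>j<k. u j * tb_row g1 g2 k j i)" ..
    from Cdef[THEN iffD1, OF that(2)] obtain v where v: "y = (\<lambda>i. \<Sum>j<k. v j * tb_row g1 g2 k j i)" ..
    show ?thesis unfolding Cdef
      by (rule exI[where x="\<lambda>j. u j + v j"]) (simp add: u v distrib_right sum.distrib)
  qed
  have cardC: "card C = 2 ^ k" using assms(2) unfolding C_def .
  have "card C * card D = 2 ^ (2 * k)"
    unfolding D_def by (rule dual_card[OF Csub C0 Cadd])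
  then have "2 ^ k * card D = 2 ^ k * (2 ^ k :: nat)"
    unfolding cardC by (simp add: mult_2 power_add)
  then have cardD: "card D = 2 ^ k" by simp
  have finD: "finite D"
    using finite_subset[of D "bvecs (2 * k)"] bvecs_fin_card unfolding D_def dual_code_def by auto
  have orth: "c \<circ> sig k \<in> D" if c: "c \<in> C" for c
  proof -
    from Cdef[THEN iffD1, OF c] obtain w where w: "c = (\<lambda>i. \<Sum>j<k. w j * tb_row g1 g2 k j i)" ..
    have "c \<circ> sig k \<in> bvecs (2 * k)"
    proof -
      have "c i = 0" if "i \<ge> 2 * k" for i using Csub c that unfolding bvecs_def by blast
      moreover have "sig k i = i" if "i \<ge> 2 * k" for i using that unfolding sig_def by simp
      ultimately show ?thesis unfolding bvecs_def by simp
    qed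
    moreover have "(\<Sum>i<2 * k. x i * (c \<circ> sig k) i) = 0" if x: "x \<in> C" for x
    proof -
      from Cdef[THEN iffD1, OF x] obtain u where u: "x = (\<lambda>i. \<Sum>l<k. u l * tb_row g1 g2 k l i)" ..
      have "(\<Sum>i<2 * k. x i * (c \<circ> sig k) i)
          = (\<Sum>i<2 * k. \<Sum>l<k. \<Sum>j<k. (u l * tb_row g1 g2 k l i) * (w j * tb_row g1 g2 k j (sig k i)))"
        unfolding u w comp_def by (rule sum.cong[OF refl]) (rule sum_product)
      also have "\<dots> = (\<Sum>l<k. \<Sum>i<2 * k. \<Sum>j<k. (u l * tb_row g1 g2 k l i) * (w j * tb_row g1 g2 k j (sig k i)))"
        by (rule sum.swap)
      also have "\<dots> = (\<Sum>l<k. \<Sum>j<k. \<Sum>i<2 * k. (u l * tb_row g1 g2 k l i) * (w j * tb_row g1 g2 k j (sig k i)))"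
        by (rule sum.cong[OF refl]) (rule sum.swap)
      also have "\<dots> = (\<Sum>l<k. \<Sum>j<k. (u l * w j) * (\<Sum>i<2 * k. tb_row g1 g2 k l i * tb_row g1 g2 k j (sig k i)))"
        by (intro sum.cong refl) (simp add: sum_distrib_left ac_simps)
      also have "\<dots> = 0" by (simp add: key_orth[OF km])
      finally show ?thesis .
    qed
    ultimately show ?thesis unfolding D_def dual_code_def by blast
  qed
  have sub: "C \<subseteq> (\<lambda>x. x \<circ> sig k) ` D"
  proof
    fix c assume c: "c \<in> C"
    have "c = (c \<circ> sig k) \<circ> sig k" by (simp add: fun_eq_iff sig_sig)
    then show "c \<in> (\<lambda>x. x \<circ> sig k) ` D" using orth[OF c] by blast
  qed
  have finI: "finite ((\<lambda>x. x \<circ> sig k) ` D)" using finD by simp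
  have "card ((\<lambda>x. x \<circ> sig k) ` D) \<le> card C"
    using card_image_le[OF finD, of "\<lambda>x. x \<circ> sig k"] cardD cardC by simp
  moreover have "card C \<le> card ((\<lambda>x. x \<circ> sig k) ` D)" using card_mono[OF finI sub] .
  ultimately have "C = (\<lambda>x. x \<circ> sig k) ` D"
    using card_subset_eq[OF finI sub] by simp
  then have "C = perm_code (sig k) D" unfolding perm_code_def inv_sig .
  then show ?thesis unfolding isodual_def C_def[symmetric] D_def[symmetric]
    using sig_permutes by blast
qed

end
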